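(* For $m\ge 2$, let $h_m^{+}$ and $h_m^{-}$ denote respectively the largest and the smallest number of matching coalescent histories of a species tree with $m$ leaves, the maximum and minimum being taken over all species trees with $m$ leaves, and let $R(m)=h_m^{+}/h_m^{-}$. Then for every odd $m\ge 7$, $$R(m)\ge\left(\frac{\sqrt{m-1}}{4\sqrt{e}}\right)^{m}.$$
   Context: A species tree is a rooted binary tree whose leaves carry distinct labels. Each node $v$ of a tree $t$ has a branch directly above it: for a non-root node this is the edge joining $v$ to its parent, and the root additionally has a root branch above it. A leaf $x$ descends from a branch if $x$ lies in the subtree below that branch. A branch $b'$ is descended from a branch $b$ if the node at the lower end of $b'$ lies in the subtree below $b$. Given a species tree $t$, a matching coalescent history of $t$ is a map $h$ from the set of internal nodes of $t$ to the set of branches of $t$ such that: (a) for every leaf $x$ and internal node $k$, if $x$ descends from $k$ then $x$ descends from the branch $h(k)$; (b) for all internal nodes $k_1,k_2$, if $k_2$ is a descendant of $k_1$ then $h(k_2)$ is descended from or coincides with $h(k_1)$. The number of matching coalescent histories depends only on the unlabeled shape of the tree. *)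

theory Defs
  imports Complex_Main "HOL-Library.FuncSet" "HOL-Library.Sublist"
begin

datatype 'a stree = Leaf 'a | Node "'a stree" "'a stree"

fun leaf_labels :: "'a stree \<Rightarrow> 'a list" where
  "leaf_labels (Leaf a) = [a]"
| "leaf_labels (Node l r) = leaf_labels l @ leaf_labels r"

definition nleaves :: "'a stree \<Rightarrow> nat" where
  "nleaves t = length (leaf_labels t)"

text \<open>Nodes are addressed by their path from the root (False = left, True = right).
  The branch above a node is identified with that node; the branch above the root is
  the root branch.  A node (or branch) q lies below the branch of node p iff p is a
  prefix of q.\<close>
fun positions :: "'a stree \<Rightarrow> bool list set" where
  "positions (Leaf a) = {[]}"
| "positions (Node l r) = insert [] (Cons False ` positions l \<union> Cons True ` positions r)"

fun internal_nodes :: "'a stree \<Rightarrow> bool list set" where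
  "internal_nodes (Leaf a) = {}"
| "internal_nodes (Node l r) =
     insert [] (Cons False ` internal_nodes l \<union> Cons True ` internal_nodes r)"

definition leaf_nodes :: "'a stree \<Rightarrow> bool list set" where
  "leaf_nodes t = positions t - internal_nodes t"

definition matching_histories :: "'a stree \<Rightarrow> (bool list \<Rightarrow> bool list) set" where
  "matching_histories t =
     {h \<in> internal_nodes t \<rightarrow>\<^sub>E positions t.
        (\<forall>x\<in>leaf_nodes t. \<forall>k\<in>internal_nodes t. prefix k x \<longrightarrow> prefix (h k) x) \<and>
        (\<forall>k1\<in>internal_nodes t. \<forall>k2\<in>internal_nodes t. prefix k1 k2 \<longrightarrow> prefix (h k1) (h k2))}"

definition num_mch :: "'a stree \<Rightarrow> nat" where
  "num_mch t = card (matching_histories t)"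

definition species_trees :: "nat \<Rightarrow> nat stree set" where
  "species_trees m = {t. nleaves t = m \<and> distinct (leaf_labels t)}"

definition h_plus :: "nat \<Rightarrow> nat" where
  "h_plus m = Max (num_mch ` species_trees m)"

definition h_minus :: "nat \<Rightarrow> nat" where
  "h_minus m = Min (num_mch ` species_trees m)"

definition R :: "nat \<Rightarrow> real" where
  "R m = real (h_plus m) / real (h_minus m)"

end

theory Submission
  imports Defs
begin


lemma internal_sub_pos: "internal_nodes t \<subseteq> positions t"
  by (induction t) auto

lemma pos_prefix_closed: "p \<in> positions t \<Longrightarrow> prefix q p \<Longrightarrow> q \<in> positions t"
proof (induction t arbitrary: p q)
  case (Leaf x) then show ?case by simp
next
  case (Node l r)
  show ?case
  proof (cases q)
    case Nil then show ?thesis by simp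
  next
    case (Cons b q')
    with Node.prems obtain p' where p: "p = b # p'" and pq: "prefix q' p'"
      by (cases p) auto
    show ?thesis using Node p pq Cons by (cases b) auto
  qed
qed

lemma nil_pos[simp]: "[] \<in> positions t"
  by (cases t) auto

lemma internal_children: "k \<in> internal_nodes t \<Longrightarrow> k @ [False] \<in> positions t \<and> k @ [True] \<in> positions t"
  by (induction t arbitrary: k) auto

lemma pos_has_leaf: "p \<in> positions t \<Longrightarrow> \<exists>x\<in>leaf_nodes t. prefix p x"
proof (induction t arbitrary: p)
  case (Leaf a) then show ?case by (auto simp: leaf_nodes_def)
next
  case (Node l r)
  show ?case
  proof (cases p)
    case Nil
    have "[] \<in> positions l" by (cases l) auto
    from Node.IH(1)[OF this] obtain x where "x \<in> leaf_nodes l" by blast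
    then have "False # x \<in> leaf_nodes (Node l r)" by (auto simp: leaf_nodes_def)
    then show ?thesis using Nil by force
  next
    case (Cons b p')
    show ?thesis
    proof (cases b)
      case True
      with Node.prems Cons have "p' \<in> positions r" by auto
      from Node.IH(2)[OF this] obtain x where "x \<in> leaf_nodes r" "prefix p' x" by blast
      then have "True # x \<in> leaf_nodes (Node l r)" "prefix p (True # x)"
        using Cons True by (auto simp: leaf_nodes_def)
      then show ?thesis by blast
    next
      case False
      with Node.prems Cons have "p' \<in> positions l" by auto
      from Node.IH(1)[OF this] obtain x where "x \<in> leaf_nodes l" "prefix p' x" by blast
      then have "False # x \<in> leaf_nodes (Node l r)" "prefix p (False # x)"
        using Cons False by (auto simp: leaf_nodes_def)
      then show ?thesis by blast
    qed
  qed
qed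

lemma prefix_both_children:
  assumes "prefix a x1" "prefix (k @ [False]) x1" "prefix a x2" "prefix (k @ [True]) x2"
  shows "prefix a k"
proof -
  have c1: "prefix a (k@[False]) \<or> prefix (k@[False]) a" using assms(1,2) prefix_same_cases by blast
  have c2: "prefix a (k@[True]) \<or> prefix (k@[True]) a" using assms(3,4) prefix_same_cases by blast
  have n1: "\<not> prefix (k@[False]) (k@[True])" by simp
  have n2: "\<not> prefix (k@[True]) (k@[False])" by simp
  have nb: "\<not> prefix (k@[b]) a" if "prefix (k@[\<not>b]) a" for b
  proof
    assume h: "prefix (k@[b]) a"
    from prefix_same_cases[OF h that] show False by (cases b) auto
  qed
  have A: "\<not> prefix (k@[False]) a"
  proof
    assume h: "prefix (k@[False]) a"
    with nb[of True] have "\<not> prefix (k@[True]) a" by simp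
    with c2 have "prefix a (k@[True])" by blast
    with h have "prefix (k@[False]) (k@[True])" using prefix_order.trans by blast
    with n1 show False by blast
  qed
  with c1 have "prefix a (k@[False])" by blast
  then have "a = k@[False] \<or> prefix a k" by (simp add: prefix_snoc)
  then show ?thesis using A by auto
qed

lemma mh_prefix:
  assumes "h \<in> matching_histories t" "k \<in> internal_nodes t"
  shows "prefix (h k) k"
proof -
  from internal_children[OF assms(2)] have "k @ [False] \<in> positions t" "k @ [True] \<in> positions t" by auto
  then obtain x1 x2 where x: "x1 \<in> leaf_nodes t" "prefix (k@[False]) x1" "x2 \<in> leaf_nodes t" "prefix (k@[True]) x2"
    using pos_has_leaf by blast
  have "prefix k x1" "prefix k x2" using x by (auto simp: prefix_def)
  then have "prefix (h k) x1" "prefix (h k) x2" using assms x unfolding matching_histories_def by auto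
  then show ?thesis using prefix_both_children x by blast
qed

definition D :: "'a stree \<Rightarrow> nat \<Rightarrow> (bool list \<Rightarrow> nat) set" where
  "D t a = {d \<in> internal_nodes t \<rightarrow>\<^sub>E (UNIV::nat set).
     (\<forall>k\<in>internal_nodes t. d k \<le> length k + a) \<and>
     (\<forall>k1\<in>internal_nodes t. \<forall>k2\<in>internal_nodes t. prefix k1 k2 \<longrightarrow> d k1 \<le> d k2)}"

lemma take_prefix_mono: "i \<le> j \<Longrightarrow> prefix (take i xs) (take j xs)"
  by (metis min.absorb1 take_is_prefix take_take)

lemma mh_bij: "bij_betw (\<lambda>h. restrict (\<lambda>k. length (h k)) (internal_nodes t)) (matching_histories t) (D t 0)"
proof (rule bij_betw_byWitness[where f'="\<lambda>d. restrict (\<lambda>k. take (d k) k) (internal_nodes t)"])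
  show "\<forall>h\<in>matching_histories t. restrict (\<lambda>k. take (restrict (\<lambda>k. length (h k)) (internal_nodes t) k) k) (internal_nodes t) = h"
  proof
    fix h assume h: "h \<in> matching_histories t"
    show "restrict (\<lambda>k. take (restrict (\<lambda>k. length (h k)) (internal_nodes t) k) k) (internal_nodes t) = h"
    proof
      fix k show "restrict (\<lambda>k. take (restrict (\<lambda>k. length (h k)) (internal_nodes t) k) k) (internal_nodes t) k = h k"
      proof (cases "k \<in> internal_nodes t")
        case True
        then have "prefix (h k) k" using mh_prefix h by blast
        then have "take (length (h k)) k = h k" by (metis append_eq_conv_conj prefix_def)
        then show ?thesis using True by simp
      next
        case False
        then show ?thesis using h unfolding matching_histories_def by (auto simp: PiE_def extensional_def)
      qed
    qed
  qed
  show "\<forall>d\<in>D t 0. restrict (\<lambda>k. length (restrict (\<lambda>k. take (d k) k) (internal_nodes t) k)) (internal_nodes t) = d"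
  proof
    fix d assume d: "d \<in> D t 0"
    show "restrict (\<lambda>k. length (restrict (\<lambda>k. take (d k) k) (internal_nodes t) k)) (internal_nodes t) = d"
    proof
      fix k show "restrict (\<lambda>k. length (restrict (\<lambda>k. take (d k) k) (internal_nodes t) k)) (internal_nodes t) k = d k"
        using d unfolding D_def by (auto simp: PiE_def extensional_def min_def)
    qed
  qed
  show "(\<lambda>h. restrict (\<lambda>k. length (h k)) (internal_nodes t)) ` matching_histories t \<subseteq> D t 0"
  proof safe
    fix h assume h: "h \<in> matching_histories t"
    have pk: "\<And>k. k \<in> internal_nodes t \<Longrightarrow> prefix (h k) k" using mh_prefix h by blast
    have mono: "\<And>k1 k2. k1 \<in> internal_nodes t \<Longrightarrow> k2 \<in> internal_nodes t \<Longrightarrow> prefix k1 k2 \<Longrightarrow> prefix (h k1) (h k2)"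
      using h unfolding matching_histories_def by blast
    show "restrict (\<lambda>k. length (h k)) (internal_nodes t) \<in> D t 0"
      unfolding D_def using pk mono by (auto simp: prefix_length_le)
  qed
  show "(\<lambda>d. restrict (\<lambda>k. take (d k) k) (internal_nodes t)) ` D t 0 \<subseteq> matching_histories t"
  proof safe
    fix d assume d: "d \<in> D t 0"
    have b: "\<And>k. k \<in> internal_nodes t \<Longrightarrow> d k \<le> length k" using d unfolding D_def by auto
    have m: "\<And>k1 k2. k1 \<in> internal_nodes t \<Longrightarrow> k2 \<in> internal_nodes t \<Longrightarrow> prefix k1 k2 \<Longrightarrow> d k1 \<le> d k2"
      using d unfolding D_def by auto
    have pos: "\<And>k. k \<in> internal_nodes t \<Longrightarrow> take (d k) k \<in> positions t"
      using internal_sub_pos pos_prefix_closed take_is_prefix by blast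
    have mono: "prefix (take (d k1) k1) (take (d k2) k2)"
      if "k1 \<in> internal_nodes t" "k2 \<in> internal_nodes t" "prefix k1 k2" for k1 k2
    proof -
      from that(3) obtain zs where k2: "k2 = k1 @ zs" by (auto simp: prefix_def)
      have "take (d k1) k1 = take (d k1) k2" using b[OF that(1)] k2 by simp
      then show ?thesis using take_prefix_mono m[OF that] by metis
    qed
    show "restrict (\<lambda>k. take (d k) k) (internal_nodes t) \<in> matching_histories t"
      unfolding matching_histories_def
    proof (intro CollectI conjI ballI impI)
      show "restrict (\<lambda>k. take (d k) k) (internal_nodes t) \<in> internal_nodes t \<rightarrow>\<^sub>E positions t"
        using pos by auto
    next
      fix x k assume "x \<in> leaf_nodes t" "k \<in> internal_nodes t" "prefix k x"
      then show "prefix (restrict (\<lambda>k. take (d k) k) (internal_nodes t) k) x"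
        using prefix_order.trans[OF take_is_prefix] by simp
    next
      fix k1 k2 assume "k1 \<in> internal_nodes t" "k2 \<in> internal_nodes t" "prefix k1 k2"
      then show "prefix (restrict (\<lambda>k. take (d k) k) (internal_nodes t) k1) (restrict (\<lambda>k. take (d k) k) (internal_nodes t) k2)"
        using mono by simp
    qed
  qed
qed



fun N :: "'a stree \<Rightarrow> nat \<Rightarrow> nat" where
  "N (Leaf x) a = 1"
| "N (Node l r) a = (\<Sum>v\<le>a. N l (a+1-v) * N r (a+1-v))"

definition comb :: "nat \<Rightarrow> (bool list \<Rightarrow> nat) \<Rightarrow> (bool list \<Rightarrow> nat) \<Rightarrow> bool list set \<Rightarrow> bool list set \<Rightarrow> bool list \<Rightarrow> nat" where
  "comb v dl dr Il Ir = (\<lambda>k. if k = [] then v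
      else if \<not> hd k \<and> tl k \<in> Il then dl (tl k) + v
      else if hd k \<and> tl k \<in> Ir then dr (tl k) + v else undefined)"

lemma comb_simps[simp]:
  "comb v dl dr Il Ir [] = v"
  "k \<in> Il \<Longrightarrow> comb v dl dr Il Ir (False # k) = dl k + v"
  "k \<in> Ir \<Longrightarrow> comb v dl dr Il Ir (True # k) = dr k + v"
  by (auto simp: comb_def)

lemma D_finite: "finite (D t a)"
proof -
  have "D t a \<subseteq> PiE (internal_nodes t) (\<lambda>k. {..length k + a})"
    unfolding D_def by auto
  moreover have "finite (internal_nodes t)" by (induction t) auto
  ultimately show ?thesis by (meson finite_PiE finite_atMost finite_subset)
qed

lemma card_D_Node:
  "card (D (Node l r) a) = (\<Sum>v\<le>a. card (D l (a+1-v)) * card (D r (a+1-v)))"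
proof -
  let ?Il = "internal_nodes l" and ?Ir = "internal_nodes r"
  let ?I = "internal_nodes (Node l r)"
  let ?S = "SIGMA v:{..a}. D l (a+1-v) \<times> D r (a+1-v)"
  let ?f = "\<lambda>(v, dl, dr). comb v dl dr ?Il ?Ir"
  let ?g = "\<lambda>d. (d [], restrict (\<lambda>k. d (False # k) - d []) ?Il, restrict (\<lambda>k. d (True # k) - d []) ?Ir)"
  have bij: "bij_betw ?f ?S (D (Node l r) a)"
  proof (rule bij_betw_byWitness[where f'="?g"])
    show "\<forall>x\<in>?S. ?g (?f x) = x"
    proof
      fix x assume "x \<in> ?S"
      then obtain v dl dr where x: "x = (v, dl, dr)" "v \<le> a" "dl \<in> D l (a+1-v)" "dr \<in> D r (a+1-v)" by auto
      have "restrict (\<lambda>k. comb v dl dr ?Il ?Ir (False # k) - v) ?Il = dl"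
      proof
        fix k show "restrict (\<lambda>k. comb v dl dr ?Il ?Ir (False # k) - v) ?Il k = dl k"
          using x(3) unfolding D_def by (auto simp: PiE_def extensional_def)
      qed
      moreover have "restrict (\<lambda>k. comb v dl dr ?Il ?Ir (True # k) - v) ?Ir = dr"
      proof
        fix k show "restrict (\<lambda>k. comb v dl dr ?Il ?Ir (True # k) - v) ?Ir k = dr k"
          using x(4) unfolding D_def by (auto simp: PiE_def extensional_def)
      qed
      ultimately show "?g (?f x) = x" using x by simp
    qed
  next
    show "\<forall>d\<in>D (Node l r) a. ?f (?g d) = d"
    proof
      fix d assume d: "d \<in> D (Node l r) a"
      have ext: "d k = undefined" if "k \<notin> ?I" for k using d that unfolding D_def by (auto simp: PiE_def extensional_def)
      have ge: "d [] \<le> d k" if "k \<in> ?I" for k using d that unfolding D_def by auto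
      show "?f (?g d) = d"
      proof
        fix k
        show "?f (?g d) k = d k"
        proof (cases k)
          case Nil then show ?thesis by simp
        next
          case (Cons b k')
          show ?thesis
          proof (cases b)
            case True
            show ?thesis
            proof (cases "k' \<in> ?Ir")
              case True2: True
              then have "d [] \<le> d (True # k')" using ge by auto
              then show ?thesis using Cons True True2 by simp
            next
              case False
              then have "k \<notin> ?I" using Cons True by auto
              then show ?thesis using Cons True False ext by (simp add: comb_def)
            qed
          next
            case False
            show ?thesis
            proof (cases "k' \<in> ?Il")
              case True2: True
              then have "d [] \<le> d (False # k')" using ge by auto
              then show ?thesis using Cons False True2 by simp
            next
              case F2: False
              then have "k \<notin> ?I" using Cons False by auto
              then show ?thesis using Cons False F2 ext by (simp add: comb_def)
            qed
          qed
        qed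
      qed
    qed
  next
    show "?f ` ?S \<subseteq> D (Node l r) a"
    proof safe
      fix v dl dr assume v: "v \<le> a" and dl: "dl \<in> D l (a+1-v)" and dr: "dr \<in> D r (a+1-v)"
      let ?d = "comb v dl dr ?Il ?Ir"
      have ext: "?d k = undefined" if "k \<notin> ?I" for k
        using that by (cases k) (auto simp: comb_def)
      have bl: "\<And>k. k \<in> ?Il \<Longrightarrow> dl k \<le> length k + (a+1-v)" and ml: "\<And>k1 k2. k1 \<in> ?Il \<Longrightarrow> k2 \<in> ?Il \<Longrightarrow> prefix k1 k2 \<Longrightarrow> dl k1 \<le> dl k2"
        using dl unfolding D_def by auto
      have br: "\<And>k. k \<in> ?Ir \<Longrightarrow> dr k \<le> length k + (a+1-v)" and mr: "\<And>k1 k2. k1 \<in> ?Ir \<Longrightarrow> k2 \<in> ?Ir \<Longrightarrow> prefix k1 k2 \<Longrightarrow> dr k1 \<le> dr k2"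
        using dr unfolding D_def by auto
      have ge: "v \<le> ?d k" if "k \<in> ?I" for k using that by auto
      have bound: "?d k \<le> length k + a" if "k \<in> ?I" for k
        using that v bl br by fastforce
      have mono: "?d k1 \<le> ?d k2" if hk: "k1 \<in> ?I" "k2 \<in> ?I" "prefix k1 k2" for k1 k2
      proof (cases k1)
        case Nil then show ?thesis using ge hk by simp
      next
        case (Cons b k1')
        then obtain k2' where k2: "k2 = b # k2'" "prefix k1' k2'" using hk(3) by (cases k2) auto
        show ?thesis using hk Cons k2 ml mr by (cases b) auto
      qed
      have "?d \<in> ?I \<rightarrow>\<^sub>E UNIV" unfolding PiE_def extensional_def using ext by blast
      then show "?d \<in> D (Node l r) a"
        unfolding D_def using bound mono by blast
    qed
  next
    show "?g ` D (Node l r) a \<subseteq> ?S"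
    proof (rule image_subsetI)
      fix d assume d: "d \<in> D (Node l r) a"
      have b: "\<And>k. k \<in> ?I \<Longrightarrow> d k \<le> length k + a" and m: "\<And>k1 k2. k1 \<in> ?I \<Longrightarrow> k2 \<in> ?I \<Longrightarrow> prefix k1 k2 \<Longrightarrow> d k1 \<le> d k2"
        using d unfolding D_def by auto
      have ge: "d [] \<le> d k" if "k \<in> ?I" for k using m that by auto
      have 1: "d [] \<in> {..a}" using b[of "[]"] by simp
      have 2: "restrict (\<lambda>k. d (False # k) - d []) ?Il \<in> D l (a+1 - d [])"
        unfolding D_def
      proof (intro CollectI conjI ballI impI)
        show "restrict (\<lambda>k. d (False # k) - d []) ?Il \<in> ?Il \<rightarrow>\<^sub>E UNIV" by simp
      next
        fix k assume k: "k \<in> ?Il"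
        then show "restrict (\<lambda>k. d (False # k) - d []) ?Il k \<le> length k + (a + 1 - d [])"
          using b[of "False # k"] b[of "[]"] by simp
      next
        fix k1 k2 assume "k1 \<in> ?Il" "k2 \<in> ?Il" "prefix k1 k2"
        then show "restrict (\<lambda>k. d (False # k) - d []) ?Il k1 \<le> restrict (\<lambda>k. d (False # k) - d []) ?Il k2"
          using m[of "False # k1" "False # k2"] by simp
      qed
      have 3: "restrict (\<lambda>k. d (True # k) - d []) ?Ir \<in> D r (a+1 - d [])"
        unfolding D_def
      proof (intro CollectI conjI ballI impI)
        show "restrict (\<lambda>k. d (True # k) - d []) ?Ir \<in> ?Ir \<rightarrow>\<^sub>E UNIV" by simp
      next
        fix k assume k: "k \<in> ?Ir"
        then show "restrict (\<lambda>k. d (True # k) - d []) ?Ir k \<le> length k + (a + 1 - d [])"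
          using b[of "True # k"] b[of "[]"] by simp
      next
        fix k1 k2 assume "k1 \<in> ?Ir" "k2 \<in> ?Ir" "prefix k1 k2"
        then show "restrict (\<lambda>k. d (True # k) - d []) ?Ir k1 \<le> restrict (\<lambda>k. d (True # k) - d []) ?Ir k2"
          using m[of "True # k1" "True # k2"] by simp
      qed
      show "?g d \<in> ?S" using 1 2 3 by simp
    qed
  qed
  have "card (D (Node l r) a) = card ?S" using bij_betw_same_card[OF bij] by simp
  also have "\<dots> = (\<Sum>v\<le>a. card (D l (a+1-v) \<times> D r (a+1-v)))"
    by (rule card_SigmaI) (auto intro: D_finite)
  also have "\<dots> = (\<Sum>v\<le>a. card (D l (a+1-v)) * card (D r (a+1-v)))"
    by (simp add: card_cartesian_product)
  finally show ?thesis .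
qed

lemma card_D: "card (D t a) = N t a"
proof (induction t arbitrary: a)
  case (Leaf x)
  have "D (Leaf x) a = {\<lambda>_. undefined}" unfolding D_def by auto
  then show ?case by simp
next
  case (Node l r)
  then show ?case by (simp add: card_D_Node)
qed

lemma num_mch_N: "num_mch t = N t 0"
  unfolding num_mch_def using bij_betw_same_card[OF mh_bij] card_D by metis



lemma N_Node_0: "N (Node l r) 0 = N l 1 * N r 1" by simp
lemma N_Node_Suc: "N (Node l r) (Suc a) = N l (a+2) * N r (a+2) + N (Node l r) a"
proof -
  have "N (Node l r) (Suc a) = (\<Sum>v\<le>Suc a. N l (Suc a+1-v) * N r (Suc a+1-v))" by (simp only: N.simps)
  also have "\<dots> = N l (Suc a+1-0) * N r (Suc a+1-0) + (\<Sum>v\<le>a. N l (Suc a+1-Suc v) * N r (Suc a+1-Suc v))"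
    by (rule sum.atMost_Suc_shift)
  also have "\<dots> = N l (a+2) * N r (a+2) + (\<Sum>v\<le>a. N l (a+1-v) * N r (a+1-v))" by simp
  finally show ?thesis by (simp only: N.simps)
qed

fun cat :: "nat \<Rightarrow> nat stree" where
  "cat 0 = Leaf 0"
| "cat (Suc n) = Node (cat n) (Leaf (Suc n))"

fun sp :: "nat \<Rightarrow> nat stree" where
  "sp 0 = Leaf 0"
| "sp (Suc j) = Node (Node (Leaf (2*j+1)) (Leaf (2*j+2))) (sp j)"

lemma N_cherry: "N (Node (Leaf x) (Leaf y)) a = a + 1" by simp

lemma N_leafR: "N (Node t (Leaf x)) (Suc a) = N t (a+2) + N (Node t (Leaf x)) a"
  by (simp only: N_Node_Suc N.simps(1) mult_1_right)

lemma N_cherryL: "N (Node (Node (Leaf x) (Leaf y)) t) (Suc a) = (a+3) * N t (a+2) + N (Node (Node (Leaf x) (Leaf y)) t) a"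
proof -
  have "N (Node (Node (Leaf x) (Leaf y)) t) (Suc a) = (a+2+1) * N t (a+2) + N (Node (Node (Leaf x) (Leaf y)) t) a"
    by (simp only: N_Node_Suc N_cherry)
  moreover have "a+2+1 = a+3" by simp
  ultimately show ?thesis by metis
qed

lemma N_cat0: "N (cat (Suc n)) 0 = N (cat n) 1"
proof -
  have "N (cat (Suc n)) 0 = N (cat n) 1 * N (Leaf (Suc n)) 1" by (simp only: cat.simps N_Node_0)
  then show ?thesis by simp
qed

lemma N_catS: "N (cat (Suc n)) (Suc a) = N (cat n) (a+2) + N (cat (Suc n)) a"
  by (simp only: cat.simps(2) N_leafR)

lemma N_sp0: "N (sp (Suc j)) 0 = 2 * N (sp j) 1"
proof -
  have "N (sp (Suc j)) 0 = N (Node (Leaf (2*j+1)) (Leaf (2*j+2))) 1 * N (sp j) 1" by (simp only: sp.simps N_Node_0)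
  then show ?thesis by (simp only: N_cherry) simp
qed

lemma N_spS: "N (sp (Suc j)) (Suc a) = (a+3) * N (sp j) (a+2) + N (sp (Suc j)) a"
  by (simp only: sp.simps(2) N_cherryL)

lemma cat_labels: "leaf_labels (cat n) = [0..<Suc n]"
  by (induction n) auto

lemma cat_species: "cat n \<in> species_trees (Suc n)"
  unfolding species_trees_def nleaves_def by (simp add: cat_labels)

lemma sp_labels: "set (leaf_labels (sp j)) \<subseteq> {..2*j} \<and> distinct (leaf_labels (sp j)) \<and> length (leaf_labels (sp j)) = 2*j+1"
  by (induction j) auto

lemma sp_species: "sp j \<in> species_trees (2*j+1)"
  unfolding species_trees_def nleaves_def using sp_labels by auto


lemma N_pos: "N t a \<ge> 1"
proof (induction t arbitrary: a)
  case (Leaf x) then show ?case by simp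
next
  case (Node l r)
  have "1 \<le> N l (a+1-0) * N r (a+1-0)" using Node by (simp add: Suc_leI)
  also have "\<dots> \<le> (\<Sum>v\<le>a. N l (a+1-v) * N r (a+1-v))"
    by (rule member_le_sum) auto
  finally show ?case by simp
qed

lemma nleaves_pos: "nleaves t \<ge> 1"
  unfolding nleaves_def by (induction t) auto

lemma nleaves_Node: "nleaves (Node l r) = nleaves l + nleaves r"
  unfolding nleaves_def by simp

lemma N_upper: "N t a \<le> (a + nleaves t) ^ (2 * nleaves t - 1)"
proof (induction t arbitrary: a)
  case (Leaf x) then show ?case by (simp add: nleaves_def)
next
  case (Node l r)
  let ?n = "nleaves l + nleaves r"
  have nl: "nleaves l \<ge> 1" "nleaves r \<ge> 1" using nleaves_pos by auto
  have t: "N l (a+1-v) * N r (a+1-v) \<le> (a + ?n) ^ (2 * ?n - 2)" if "v \<le> a" for v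
  proof -
    have "N l (a+1-v) \<le> (a + 1 - v + nleaves l) ^ (2 * nleaves l - 1)" by (rule Node.IH)
    also have "\<dots> \<le> (a + ?n) ^ (2 * nleaves l - 1)"
      by (rule power_mono) (use nl that in auto)
    finally have 1: "N l (a+1-v) \<le> (a + ?n) ^ (2 * nleaves l - 1)" .
    have "N r (a+1-v) \<le> (a + 1 - v + nleaves r) ^ (2 * nleaves r - 1)" by (rule Node.IH)
    also have "\<dots> \<le> (a + ?n) ^ (2 * nleaves r - 1)"
      by (rule power_mono) (use nl that in auto)
    finally have 2: "N r (a+1-v) \<le> (a + ?n) ^ (2 * nleaves r - 1)" .
    have "N l (a+1-v) * N r (a+1-v) \<le> (a + ?n) ^ (2 * nleaves l - 1) * (a + ?n) ^ (2 * nleaves r - 1)"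
      using 1 2 by (rule mult_le_mono)
    also have "\<dots> = (a + ?n) ^ (2 * ?n - 2)"
      using nl by (simp add: power_add[symmetric])
    finally show ?thesis .
  qed
  have "N (Node l r) a = (\<Sum>v\<le>a. N l (a+1-v) * N r (a+1-v))" by (simp only: N.simps)
  also have "\<dots> \<le> (\<Sum>v\<le>a. (a + ?n) ^ (2 * ?n - 2))"
    by (rule sum_mono) (use t in auto)
  also have "\<dots> = (a+1) * (a + ?n) ^ (2 * ?n - 2)" by simp
  also have "\<dots> \<le> (a + ?n) * (a + ?n) ^ (2 * ?n - 2)"
    using nl by (intro mult_le_mono1) auto
  also have "\<dots> = (a + ?n) ^ (2 * ?n - 1)"
  proof -
    have "2 * ?n - 1 = Suc (2 * ?n - 2)" using nl by simp
    then show ?thesis by (simp only: power_Suc)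
  qed
  finally show ?case unfolding nleaves_Node .
qed


lemma sp_lower: "2^j * fact j * N (sp j) a \<ge> pochhammer (a+1) (2*j)"
proof (induction j arbitrary: a)
  case 0 then show ?case by simp
next
  case (Suc j)
  note IHj = Suc.IH
  show ?case
  proof (induction a)
    case 0
    have "pochhammer (0+1::nat) (2 * Suc j) = fact (2*j+2)" by (simp add: pochhammer_fact)
    also have "\<dots> = (2*j+2) * fact (2*j+1)" by simp
    also have "fact (2*j+1) = (pochhammer (1+1::nat) (2*j))"
    proof -
      have "fact (2*j+1) = pochhammer (1::nat) (Suc (2*j))" by (simp only: pochhammer_fact Suc_eq_plus1)
      also have "\<dots> = 1 * pochhammer (1+1) (2*j)" by (rule pochhammer_rec)
      finally show ?thesis by simp
    qed
    also have "(2*j+2) * \<dots> \<le> (2*j+2) * (2^j * fact j * N (sp j) 1)"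
      using IHj[of 1] by (rule mult_le_mono2)
    also have "\<dots> \<le> 2^Suc j * fact (Suc j) * N (sp (Suc j)) 0"
      by (simp only: N_sp0) (simp add: algebra_simps)
    finally show ?case by simp
  next
    case (Suc a)
    let ?P = "pochhammer (a+3::nat) (2*j)"
    have h1: "pochhammer (a+1::nat) (2 * Suc j) = (a+1) * ((a+2) * ?P)"
      by (simp add: pochhammer_rec numeral_2_eq_2 numeral_3_eq_3)
    have h2a: "pochhammer (a+2::nat) (Suc (Suc (2*j))) = pochhammer (a+2) (Suc (2*j)) * (a+2 + of_nat (Suc (2*j)))"
      by (rule pochhammer_Suc)
    have h2b: "pochhammer (a+2::nat) (Suc (2*j)) = (a+2) * pochhammer (a+2+1) (2*j)"
      by (rule pochhammer_rec)
    have h2: "pochhammer (Suc a + 1::nat) (2 * Suc j) = (a+2) * ?P * (a+2*j+3)"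
    proof -
      have e1: "Suc a + 1 = a + 2" and e2: "2 * Suc j = Suc (Suc (2*j))" by simp_all
      have e3: "a+2+1 = a+3" and e4: "a+2 + of_nat (Suc (2*j)) = a+2*j+(3::nat)" by simp_all
      have "pochhammer (Suc a + 1::nat) (2 * Suc j) = pochhammer (a+2::nat) (Suc (Suc (2*j)))"
        by (simp only: e1 e2)
      also have "\<dots> = (a+2) * pochhammer (a+2+1) (2*j) * (a+2 + of_nat (Suc (2*j)))"
        by (simp only: h2a h2b)
      also have "\<dots> = (a+2) * ?P * (a+2*j+3)" by (simp only: e3 e4)
      finally show ?thesis .
    qed
    have key: "pochhammer (Suc a + 1::nat) (2 * Suc j) = pochhammer (a + 1) (2 * Suc j) + (2*j+2) * (a+2) * ?P"
      unfolding h1 h2 by (simp add: algebra_simps)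
    have y: "(2*j+2) * (a+2) * ?P \<le> 2 * (j+1) * (a+3) * (2^j * fact j * N (sp j) (a+2))"
      using IHj[of "a+2"] by (intro mult_mono) (auto simp: numeral_3_eq_3)
    have "pochhammer (Suc a + 1::nat) (2 * Suc j) \<le> 2^Suc j * fact (Suc j) * N (sp (Suc j)) a + 2 * (j+1) * (a+3) * (2^j * fact j * N (sp j) (a+2))"
      unfolding key using Suc.IH y by (rule add_mono)
    also have "\<dots> = 2^Suc j * fact (Suc j) * N (sp (Suc j)) (Suc a)"
      by (simp only: N_spS) (simp add: algebra_simps)
    finally show ?case .
  qed
qed


lemma cat_formula: "N (cat (Suc n)) a + ((2*n+2+a) choose n) = (2*n+2+a) choose (Suc n)"
proof (induction n arbitrary: a)
  case 0 then show ?case by simp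
next
  case (Suc n)
  note IHn = Suc.IH
  show ?case
  proof (induction a)
    case 0
    have i: "N (cat (n+1)) 1 + ((2*n+3) choose n) = (2*n+3) choose (n+1)"
      using IHn[of 1] by (simp del: cat.simps N.simps binomial_Suc_Suc add: add.commute add.left_commute numeral_eq_Suc)
    have p1: "(2*n+4) choose (n+2) = ((2*n+3) choose (n+1)) + ((2*n+3) choose (n+2))"
      using binomial_Suc_Suc[of "2*n+3" "n+1"] by (simp add: numeral_eq_Suc)
    have p2: "(2*n+4) choose (n+1) = ((2*n+3) choose n) + ((2*n+3) choose (n+1))"
      using binomial_Suc_Suc[of "2*n+3" "n"] by (simp add: numeral_eq_Suc)
    have sy: "(2*n+3) choose (n+2) = (2*n+3) choose (n+1)"
      using binomial_symmetric[of "n+2" "2*n+3"] by simp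
    have e: "N (cat (n+2)) 0 = N (cat (n+1)) 1" using N_cat0[of "n+1"] by (simp del: cat.simps N.simps)
    have g: "N (cat (n+2)) 0 + ((2*n+4) choose (n+1)) = (2*n+4) choose (n+2)"
      using i p1 p2 sy e by linarith
    have c1: "2 * Suc n + 2 + 0 = 2*n+4" and c2: "Suc (Suc n) = n+2" and c3: "Suc n = n+1" by simp_all
    show ?case apply (unfold c1) apply (unfold c2) apply (unfold c3) by (rule g)
  next
    case (Suc a)
    let ?M = "2*n+4+a"
    have i1: "N (cat (n+1)) (a+2) + (?M choose n) = ?M choose (n+1)"
    proof -
      have c: "2*n+2+(a+2) = ?M" by simp
      show ?thesis using IHn[of "a+2"] by (simp only: c Suc_eq_plus1)
    qed
    have i2: "N (cat (n+2)) a + (?M choose (n+1)) = ?M choose (n+2)"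
    proof -
      have c: "2*(n+1)+2+a = ?M" and c3: "Suc n = n+1" and c4: "Suc (n+1) = n+2" by simp_all
      show ?thesis using Suc.IH by (simp only: c c3 c4)
    qed
    have p1: "(?M+1) choose (n+1) = (?M choose n) + (?M choose (n+1))" using binomial_Suc_Suc[of ?M n] by simp
    have p2: "(?M+1) choose (n+2) = (?M choose (n+1)) + (?M choose (n+2))" using binomial_Suc_Suc[of ?M "n+1"] by simp
    have e: "N (cat (n+2)) (a+1) = N (cat (n+1)) (a+2) + N (cat (n+2)) a"
      using N_catS[of "n+1" a] by (simp del: cat.simps N.simps)
    have g: "N (cat (n+2)) (a+1) + ((?M+1) choose (n+1)) = (?M+1) choose (n+2)"
      using i1 i2 p1 p2 e by linarith
    have c1: "2 * Suc n + 2 + Suc a = ?M+1" and c2: "Suc (Suc n) = n+2" and c3: "Suc n = n+1" and c4: "Suc a = a+1" by simp_all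
    show ?case apply (unfold c1) apply (unfold c2) apply (unfold c3) apply (unfold c4) by (rule g)
  qed
qed

lemma cat_catalan: "(n+2) * N (cat (Suc n)) 0 = (2*n+2) choose (n+1)"
proof -
  have f: "N (cat (Suc n)) 0 + ((2*n+2) choose n) = (2*n+2) choose (Suc n)" using cat_formula[of n 0] by (simp del: cat.simps N.simps)
  have e: "(n+2) * ((2*n+2) choose n) = (n+1) * ((2*n+2) choose (n+1))"
    by (metis Suc_eq_plus1 Suc_times_binomial_add add_2_eq_Suc' left_add_twice)
  from f have "(n+2) * N (cat (Suc n)) 0 + (n+2) * ((2*n+2) choose n) = (n+2) * ((2*n+2) choose (Suc n))"
    by (metis add_mult_distrib2)
  then show ?thesis using e by simp
qed



fun A :: "nat \<Rightarrow> real" where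
  "A 0 = 1"
| "A (Suc k) = (2*k+1) * A k"

lemma A_pos: "A k > 0" by (induction k) auto

lemma A_fact_mult: "2^k * fact k * A k = fact (2*k)"
proof (induction k)
  case 0 then show ?case by simp
next
  case (Suc k)
  have "2^Suc k * fact (Suc k) * A (Suc k) = (2*real k+2)*(2*real k+1) * (2^k * fact k * A k)"
    by (simp add: algebra_simps)
  also have "\<dots> = (2*real k+2)*(2*real k+1) * fact (2*k)" by (simp only: Suc.IH)
  also have "\<dots> = fact (Suc (Suc (2*k)))"
    by (simp only: fact_Suc of_nat_Suc of_nat_mult of_nat_numeral) algebra
  also have "Suc (Suc (2*k)) = 2 * Suc k" by simp
  finally show ?case .
qed

lemma A_fact: "A k = fact (2*k) / (2^k * fact k)"
  using A_fact_mult[of k] by (simp add: field_simps)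

lemma pow_bound:
  assumes "k \<ge> 1"
  shows "(2*real k+2)^(2*k) \<le> (2*real k)^(2*k) * exp 1 ^ 2"
proof -
  have kp: "real k > 0" using assms by simp
  have "2*real k+2 = (2*real k) * (1 + 1/real k)" using kp by (simp add: field_simps)
  also have "\<dots> \<le> (2*real k) * exp (1/real k)"
    using kp by (intro mult_left_mono) (auto intro: exp_ge_add_one_self[of "1/real k", simplified add.commute])
  finally have "(2*real k+2)^(2*k) \<le> ((2*real k) * exp (1/real k))^(2*k)"
    by (rule power_mono) simp
  also have "\<dots> = (2*real k)^(2*k) * exp (1/real k)^(2*k)" by (simp add: power_mult_distrib)
  also have "exp (1/real k)^(2*k) = exp (real (2*k) * (1/real k))" by (simp only: exp_of_nat_mult)
  also have "real (2*k) * (1/real k) = 2" using kp by simp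
  also have "exp 2 = exp (1::real) ^ 2" by (metis exp_of_nat_mult mult.right_neutral of_nat_numeral)
  finally show ?thesis .
qed

lemma Q: "k \<ge> 1 \<Longrightarrow> 4 * real k * (A k)^2 * exp 1^(2*k) \<ge> exp 1^2 * (2*real k)^(2*k)"
proof (induction k rule: dec_induct)
  case base then show ?case by (simp add: power2_eq_square)
next
  case (step k)
  define E :: real where "E = exp 1"
  define P :: real where "P = (2*real k)^(2*k)"
  define X :: real where "X = 4 * (A k)^2 * E^(2*k)"
  define B :: real where "B = (2*real k+2)^(2*k)"
  have kp: "real k \<ge> 1" using step by simp
  have ih: "real k * X \<ge> E^2 * P" using step.IH unfolding X_def E_def P_def by (simp add: algebra_simps)
  have pb: "B \<le> P * E^2" using pow_bound step unfolding B_def P_def E_def by simp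
  have Ppos: "P \<ge> 0" unfolding P_def by simp
  have Epos: "E > 0" unfolding E_def by simp
  have e1: "2 * real (Suc k) = 2*real k+2" and e2: "2 * Suc k = 2 + 2*k" by simp_all
  have "E^2 * (2 * real (Suc k))^(2 * Suc k) = E^2 * (2*real k+2)^2 * B"
    unfolding e1 e2 power_add B_def by (simp only: mult.assoc)
  also have "\<dots> \<le> E^2 * (2*real k+2)^2 * (P * E^2)"
    using pb by (intro mult_left_mono) auto
  also have "\<dots> = 4 * (real k + 1)^2 * (E^2 * E^2 * P)" by (simp add: power2_eq_square algebra_simps)
  also have "\<dots> \<le> (real k + 1) * (2*real k+1)^2 * (E^2 * E^2 * P) / real k"
  proof -
    have "4 * (real k + 1)^2 * real k \<le> (real k + 1) * (2*real k+1)^2"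
      using kp by (simp add: power2_eq_square algebra_simps)
    then have "4 * (real k + 1)^2 * real k * (E^2 * E^2 * P) \<le> (real k + 1) * (2*real k+1)^2 * (E^2 * E^2 * P)"
      using Ppos by (intro mult_right_mono) auto
    then show ?thesis using kp by (simp add: field_simps)
  qed
  also have "\<dots> \<le> (real k + 1) * (2*real k+1)^2 * E^2 * (real k * X) / real k"
  proof -
    have "(real k + 1) * (2*real k+1)^2 * (E^2 * E^2 * P) = ((real k + 1) * (2*real k+1)^2 * E^2) * (E^2 * P)"
      by (simp only: mult_ac)
    also have "\<dots> \<le> ((real k + 1) * (2*real k+1)^2 * E^2) * (real k * X)"
      using ih by (intro mult_left_mono) auto
    finally show ?thesis using kp by (intro divide_right_mono) (auto simp: mult_ac)
  qed
  also have "\<dots> = 4 * real (Suc k) * (A (Suc k))^2 * E^(2 * Suc k)"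
    using kp unfolding X_def by (simp add: field_simps power2_eq_square power_add)
  finally show ?case unfolding E_def .
qed

lemma final_ineq:
  assumes "k \<ge> 1"
  shows "A k * (2*k+1) / 16^k \<ge> (sqrt (2*real k) / (4 * sqrt (exp 1))) ^ (2*k+1)"
proof (rule power2_le_imp_le)
  let ?E = "exp 1 :: real"
  let ?P = "(2*real k)^(2*k)"
  have kp: "real k \<ge> 1" using assms by simp
  have q: "4 * real k * (A k)^2 * ?E^(2*k) \<ge> ?E^2 * ?P" using Q assms by blast
  have "((sqrt (2*real k) / (4 * sqrt ?E)) ^ (2*k+1))^2 = ((sqrt (2*real k) / (4 * sqrt ?E))^2) ^ (2*k+1)"
    by (simp only: power_mult[symmetric] mult.commute)
  also have "(sqrt (2*real k) / (4 * sqrt ?E))^2 = 2*real k / (16 * ?E)"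
    by (simp add: power_divide power_mult_distrib)
  also have "(2*real k / (16 * ?E)) ^ (2*k+1) = ?P * (2*real k) / (16 * 256^k * ?E^(2*k) * ?E)"
  proof -
    have f1: "(2*real k)^(2*k+1) = ?P * (2*real k)" by simp
    have f0: "(16::real)^(2*k) = 256^k" by (simp add: power_mult)
    have f2: "(16*?E)^(2*k+1) = 16*256^k*?E^(2*k)*?E"
      by (simp only: power_mult_distrib power_add f0 power_one_right)
    show ?thesis by (simp only: power_divide f1 f2)
  qed
  also have "\<dots> \<le> (A k * (2*k+1) / 16^k)^2"
  proof -
    define E :: real where "E = exp 1"
    define P :: real where "P = (2*real k)^(2*k)"
    define Y :: real where "Y = (A k)^2 * E^(2*k)"
    have Epos: "E > 0" and E1: "E \<ge> 1" unfolding E_def by simp_all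
    have Ppos: "P \<ge> 0" unfolding P_def by simp
    have Ypos: "Y \<ge> 0" unfolding Y_def using Epos by simp
    have q': "E^2 * P \<le> 4 * real k * Y" using q unfolding E_def P_def Y_def by (simp add: algebra_simps)
    have E2: "E^2 \<ge> 1" using E1 by (simp add: one_le_power)
    have "P * (2*real k) \<le> E^2 * (P * (2*real k))"
      using mult_right_mono[OF E2, of "P*(2*real k)"] Ppos kp by simp
    also have "\<dots> = (E^2 * P) * (2*real k)" by (simp only: mult_ac)
    also have "\<dots> \<le> (4 * real k * Y) * (2 * real k)" using q' kp by (intro mult_right_mono) auto
    also have "\<dots> = (8 * real k^2) * Y" by (simp add: power2_eq_square)
    also have "\<dots> \<le> (16 * E * (real (2*k+1))^2) * Y"
    proof (intro mult_right_mono Ypos)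
      have "8 * real k^2 \<le> 16 * (real (2*k+1))^2" by (simp add: power2_eq_square algebra_simps)
      also have "\<dots> \<le> 16 * E * (real (2*k+1))^2" using E1 by simp
      finally show "8 * real k^2 \<le> 16 * E * (real (2*k+1))^2" .
    qed
    finally have main2: "P * (2*real k) \<le> 16 * E * (real (2*k+1))^2 * Y" .
    have f0: "((16::real)^k)^2 = 256^k"
    proof -
      have "((16::real)^k)^2 = (16^2)^k" by (simp only: power_mult[symmetric] mult.commute)
      also have "(16::real)^2 = 256" by simp
      finally show ?thesis .
    qed
    have "(A k * (2*k+1) / 16^k)^2 = (A k)^2 * (real (2*k+1))^2 / 256^k"
      by (simp only: power_divide power_mult_distrib f0)
    moreover have "P * (2*real k) / (16 * 256^k * E^(2*k) * E) \<le> (A k)^2 * (real (2*k+1))^2 / 256^k"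
      using main2 Epos unfolding Y_def by (simp add: field_simps)
    ultimately show ?thesis unfolding E_def P_def by simp
  qed
  finally show "((sqrt (2*real k) / (4 * sqrt ?E)) ^ (2*k+1))^2 \<le> (A k * (2*k+1) / 16^k)^2" .
  show "0 \<le> A k * (2*k+1) / 16^k" using A_pos[of k] by simp
qed



lemma num_mch_bound: "t \<in> species_trees m \<Longrightarrow> num_mch t \<le> m^(2*m-1)"
  using N_upper[of t 0] unfolding num_mch_N species_trees_def by simp

lemma img_finite: "finite (num_mch ` species_trees m)"
proof (rule finite_subset)
  show "num_mch ` species_trees m \<subseteq> {..m^(2*m-1)}" using num_mch_bound by auto
qed simp

lemma img_ne: "m \<ge> 1 \<Longrightarrow> num_mch ` species_trees m \<noteq> {}"
  using cat_species[of "m-1"] by auto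

lemma h_plus_ge: "t \<in> species_trees m \<Longrightarrow> num_mch t \<le> h_plus m"
  unfolding h_plus_def using img_finite by (intro Max_ge) auto

lemma h_minus_le: "t \<in> species_trees m \<Longrightarrow> h_minus m \<le> num_mch t"
  unfolding h_minus_def using img_finite by (intro Min_le) auto

lemma h_minus_pos: "m \<ge> 1 \<Longrightarrow> h_minus m \<ge> 1"
proof -
  assume m: "m \<ge> 1"
  have "h_minus m \<in> num_mch ` species_trees m"
    unfolding h_minus_def using img_finite img_ne[OF m] by (rule Min_in)
  then show ?thesis using N_pos by (auto simp: num_mch_N)
qed

theorem corollary2:
  fixes m :: nat
  assumes "odd m" and "m \<ge> 7"
  shows "R m \<ge> (sqrt (real m - 1) / (4 * sqrt (exp 1))) ^ m"
proof -
  obtain k where m: "m = 2*k+1" using assms(1) oddE by blast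
  have k1: "k \<ge> 1" using assms(2) m by simp
  define S where "S = N (sp k) 0"
  define C where "C = N (cat (2*k)) 0"
  have S1: "(fact (2*k) :: nat) \<le> 2^k * fact k * S"
    using sp_lower[where j=k and a=0] pochhammer_fact[of "2*k", where 'a=nat] unfolding S_def by simp
  have SA: "A k \<le> real S"
  proof -
    have "real (fact (2*k)) \<le> real (2^k * fact k * S)" using S1 by (simp only: of_nat_le_iff)
    then have "fact (2*k) \<le> 2^k * fact k * real S" by simp
    then show ?thesis unfolding A_fact by (simp add: field_simps)
  qed
  have Cc: "(2*k+1) * C = (4*k) choose (2*k)"
  proof -
    have e: "Suc (2*k-1) = 2*k" "2*k-1+2 = 2*k+1" "2*(2*k-1)+2 = 4*k" "2*k-1+1 = 2*k" using k1 by auto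
    show ?thesis using cat_catalan[of "2*k-1"] unfolding C_def e by simp
  qed
  have C16: "(2*k+1) * C \<le> 16^k"
  proof -
    have "(4*k) choose (2*k) \<le> 2^(4*k)" by (rule binomial_le_pow2)
    also have "(2::nat)^(4*k) = 16^k" by (simp add: power_mult)
    finally show ?thesis using Cc by simp
  qed
  have hp: "real S \<le> real (h_plus m)"
    using h_plus_ge[OF sp_species[of k]] m unfolding S_def num_mch_N by simp
  have hm: "real (h_minus m) \<le> real C"
    using h_minus_le[OF cat_species[of "2*k"]] m unfolding C_def num_mch_N by simp
  have hm1: "real (h_minus m) \<ge> 1" using h_minus_pos[of m] m by simp
  have Cpos: "real C > 0" using hm hm1 by simp
  have "A k * (2*k+1) / 16^k \<le> real S / real C"
  proof -
    have "real ((2*k+1) * C) \<le> real ((16::nat)^k)" using C16 by (simp only: of_nat_le_iff)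
    then have c: "(2*real k+1) * real C \<le> 16^k" by (simp add: algebra_simps)
    have "A k * (2*k+1) / 16^k \<le> real S * (2*k+1) / 16^k"
      using SA by (intro divide_right_mono mult_right_mono) auto
    also have "\<dots> \<le> real S / real C"
    proof -
      have mm: "real S * ((2*real k+1) * real C) \<le> real S * 16^k" using mult_left_mono[OF c, of "real S"] by simp
      then show ?thesis using Cpos by (simp add: field_simps)
    qed
    finally show ?thesis .
  qed
  also have "real S / real C \<le> real (h_plus m) / real (h_minus m)"
    using hp hm hm1 Cpos by (intro frac_le) auto
  also have "\<dots> = R m" unfolding R_def by simp
  finally have "A k * (2*k+1) / 16^k \<le> R m" .
  moreover have "real m - 1 = 2 * real k" using m by simp
  ultimately show ?thesis using final_ineq[OF k1] m by simp
qed

end
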